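(* Let $G$ be finite and $z\in\mathbb C\setminus\{0\}$. Then the eigenspace $\{f\in D_\infty:\mathcal Tf=zf\}$ is contained in $D_1$ and, under the identification $D_1\cong\mathrm{Map}(E)$, equals $\mathrm{Eq}(S,z\,\mathrm{Id})$. If $z\notin\{-1,0,1\}$, the twisted gradient $d_z$ gives an isomorphism from $\mathrm{Eq}(\Sigma,R_z)=\mathrm{Eq}(\Delta,L_z)$ onto this eigenspace.
   Context: $G$ is a finite connected graph with vertex set $V$ (no loops, no multiple edges, every vertex of degree $\ge2$); $\deg v=1+q(v)$. $E$ oriented edges, $\iota,\tau$ initial/terminal vertex maps, $\bar e$ opposite; turn $e\rightsquigarrow e'$ iff $\tau(e)=\iota(e')$, $e'\ne\bar e$. $P$ = infinite paths $(e_1,e_2,\dots)$ with $e_i\rightsquigarrow e_{i+1}$; $(\mathcal Tf)(e_1,\dots)=\sum_{e_0\rightsquigarrow e_1}f(e_0,e_1,\dots)$. $D_m$ = functions on $P$ depending only on $e_1,\dots,e_m$; $D_\infty=\bigcup_mD_m$; $D_1\cong\mathrm{Map}(E)$. $(Sg)(e)=\sum_{e'\rightsquigarrow e}g(e')$; $(\Sigma f)(v)=\sum_{w\text{ adj. }v}f(w)$; $(\Delta f)(v)=\frac{1}{1+q(v)}\sum_{w\text{ adj. }v}f(w)$; $R_z$, $L_z$ = multiplication by $z+q(v)z^{-1}$ resp. $\frac{z+z^{-1}q(v)}{1+q(v)}$; $d_zf=f\circ\iota-z^{-1}f\circ\tau$; $\mathrm{Eq}(A,B)=\{f:Af=Bf\}$.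 *)

theory Defs
  imports Complex_Main
begin

text \<open>Oriented edges are pairs (u,w) with adj u w;
iota = fst, tau = snd, opposite edge = prod.swap.
Infinite paths are indexed from 0 (so p 0 is e_1 of the paper).\<close>

definition graph_ok :: "'v set \<Rightarrow> ('v \<Rightarrow> 'v \<Rightarrow> bool) \<Rightarrow> bool" where
  "graph_ok V adj \<longleftrightarrow> finite V \<and> V \<noteq> {}
     \<and> (\<forall>u w. adj u w \<longrightarrow> u \<in> V \<and> w \<in> V)
     \<and> (\<forall>u w. adj u w \<longrightarrow> adj w u)
     \<and> (\<forall>u. \<not> adj u u)
     \<and> (\<forall>u\<in>V. \<forall>w\<in>V. (u, w) \<in> {(a, b). adj a b}\<^sup>*)
     \<and> (\<forall>v\<in>V. card {w. adj v w} \<ge> 2)"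

definition Edges :: "('v \<Rightarrow> 'v \<Rightarrow> bool) \<Rightarrow> ('v \<times> 'v) set" where
  "Edges adj = {(u, w). adj u w}"

definition qv :: "('v \<Rightarrow> 'v \<Rightarrow> bool) \<Rightarrow> 'v \<Rightarrow> nat" where
  "qv adj v = card {w. adj v w} - 1"

definition turn :: "'v \<times> 'v \<Rightarrow> 'v \<times> 'v \<Rightarrow> bool" where
  "turn e e' \<longleftrightarrow> snd e = fst e' \<and> e' \<noteq> prod.swap e"

definition Paths :: "('v \<Rightarrow> 'v \<Rightarrow> bool) \<Rightarrow> (nat \<Rightarrow> 'v \<times> 'v) set" where
  "Paths adj = {p. \<forall>i. p i \<in> Edges adj \<and> turn (p i) (p (Suc i))}"

definition FunP :: "('v \<Rightarrow> 'v \<Rightarrow> bool) \<Rightarrow> ((nat \<Rightarrow> 'v \<times> 'v) \<Rightarrow> complex) set" where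
  "FunP adj = {f. \<forall>p. p \<notin> Paths adj \<longrightarrow> f p = 0}"

definition Transfer :: "('v \<Rightarrow> 'v \<Rightarrow> bool) \<Rightarrow> ((nat \<Rightarrow> 'v \<times> 'v) \<Rightarrow> complex)
    \<Rightarrow> (nat \<Rightarrow> 'v \<times> 'v) \<Rightarrow> complex" where
  "Transfer adj f p = (if p \<in> Paths adj
      then (\<Sum>e0\<in>{e0\<in>Edges adj. turn e0 (p 0)}. f (case_nat e0 p)) else 0)"

definition Dm :: "('v \<Rightarrow> 'v \<Rightarrow> bool) \<Rightarrow> nat \<Rightarrow> ((nat \<Rightarrow> 'v \<times> 'v) \<Rightarrow> complex) set" where
  "Dm adj m = {f \<in> FunP adj. \<forall>p\<in>Paths adj. \<forall>p'\<in>Paths adj.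
                 (\<forall>i<m. p i = p' i) \<longrightarrow> f p = f p'}"

definition Dinf :: "('v \<Rightarrow> 'v \<Rightarrow> bool) \<Rightarrow> ((nat \<Rightarrow> 'v \<times> 'v) \<Rightarrow> complex) set" where
  "Dinf adj = (\<Union>m. Dm adj m)"

definition Eigenspace :: "('v \<Rightarrow> 'v \<Rightarrow> bool) \<Rightarrow> complex \<Rightarrow> ((nat \<Rightarrow> 'v \<times> 'v) \<Rightarrow> complex) set" where
  "Eigenspace adj z = {f \<in> Dinf adj. Transfer adj f = (\<lambda>p. z * f p)}"

text \<open>Map(E): functions on oriented edges, vanishing off E; the identification
Map(E) ~ D_1 is g |-> (p |-> g(e_1)).\<close>
definition MapE :: "('v \<Rightarrow> 'v \<Rightarrow> bool) \<Rightarrow> ('v \<times> 'v \<Rightarrow> complex) set" where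
  "MapE adj = {g. \<forall>e. e \<notin> Edges adj \<longrightarrow> g e = 0}"

definition liftE :: "('v \<Rightarrow> 'v \<Rightarrow> bool) \<Rightarrow> ('v \<times> 'v \<Rightarrow> complex) \<Rightarrow> (nat \<Rightarrow> 'v \<times> 'v) \<Rightarrow> complex" where
  "liftE adj g p = (if p \<in> Paths adj then g (p 0) else 0)"

definition Sop :: "('v \<Rightarrow> 'v \<Rightarrow> bool) \<Rightarrow> ('v \<times> 'v \<Rightarrow> complex) \<Rightarrow> 'v \<times> 'v \<Rightarrow> complex" where
  "Sop adj g e = (\<Sum>e'\<in>{e'\<in>Edges adj. turn e' e}. g e')"

definition EqS :: "('v \<Rightarrow> 'v \<Rightarrow> bool) \<Rightarrow> complex \<Rightarrow> ('v \<times> 'v \<Rightarrow> complex) set" where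
  "EqS adj z = {g \<in> MapE adj. \<forall>e\<in>Edges adj. Sop adj g e = z * g e}"

definition MapV :: "'v set \<Rightarrow> ('v \<Rightarrow> complex) set" where
  "MapV V = {f. \<forall>v. v \<notin> V \<longrightarrow> f v = 0}"

definition SigmaOp :: "('v \<Rightarrow> 'v \<Rightarrow> bool) \<Rightarrow> ('v \<Rightarrow> complex) \<Rightarrow> 'v \<Rightarrow> complex" where
  "SigmaOp adj f v = (\<Sum>w\<in>{w. adj v w}. f w)"

definition DeltaOp :: "('v \<Rightarrow> 'v \<Rightarrow> bool) \<Rightarrow> ('v \<Rightarrow> complex) \<Rightarrow> 'v \<Rightarrow> complex" where
  "DeltaOp adj f v = (1 / (1 + of_nat (qv adj v))) * (\<Sum>w\<in>{w. adj v w}. f w)"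

definition Rz :: "('v \<Rightarrow> 'v \<Rightarrow> bool) \<Rightarrow> complex \<Rightarrow> ('v \<Rightarrow> complex) \<Rightarrow> 'v \<Rightarrow> complex" where
  "Rz adj z f v = (z + of_nat (qv adj v) / z) * f v"

definition Lz :: "('v \<Rightarrow> 'v \<Rightarrow> bool) \<Rightarrow> complex \<Rightarrow> ('v \<Rightarrow> complex) \<Rightarrow> 'v \<Rightarrow> complex" where
  "Lz adj z f v = ((z + of_nat (qv adj v) / z) / (1 + of_nat (qv adj v))) * f v"

definition EqV :: "'v set \<Rightarrow> (('v \<Rightarrow> complex) \<Rightarrow> 'v \<Rightarrow> complex)
      \<Rightarrow> (('v \<Rightarrow> complex) \<Rightarrow> 'v \<Rightarrow> complex) \<Rightarrow> ('v \<Rightarrow> complex) set" where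
  "EqV V A B = {f \<in> MapV V. \<forall>v\<in>V. A f v = B f v}"

definition dz :: "('v \<Rightarrow> 'v \<Rightarrow> bool) \<Rightarrow> complex \<Rightarrow> ('v \<Rightarrow> complex) \<Rightarrow> 'v \<times> 'v \<Rightarrow> complex" where
  "dz adj z f e = (if e \<in> Edges adj then f (fst e) - f (snd e) / z else 0)"

end

theory Submission
  imports Defs
begin

lemma go_sym: "graph_ok V adj \<Longrightarrow> adj u w \<Longrightarrow> adj w u" by (simp add: graph_ok_def)
lemma go_V: "graph_ok V adj \<Longrightarrow> adj u w \<Longrightarrow> u \<in> V \<and> w \<in> V" by (simp add: graph_ok_def)
lemma go_fin: "graph_ok V adj \<Longrightarrow> finite {w. adj u w}"
proof -
  assume g: "graph_ok V adj"
  have "{w. adj u w} \<subseteq> V" using go_V[OF g] by blast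
  moreover have "finite V" using g by (simp add: graph_ok_def)
  ultimately show ?thesis by (rule finite_subset)
qed
lemma go_card: "graph_ok V adj \<Longrightarrow> u \<in> V \<Longrightarrow> card {w. adj u w} = 1 + qv adj u"
  unfolding graph_ok_def qv_def by fastforce

lemma go_nb:
  assumes g: "graph_ok V adj" and u: "u \<in> V"
  shows "\<exists>w. adj u w"
proof -
  have "card {x. adj u x} \<ge> 2" using g u by (simp add: graph_ok_def)
  have "{x. adj u x} \<noteq> {}"
  proof
    assume "{x. adj u x} = {}"
    hence "card {x. adj u x} = 0" by simp
    with \<open>card {x. adj u x} \<ge> 2\<close> show False by simp
  qed
  thus ?thesis by auto
qed

lemma go_next:
  assumes g: "graph_ok V adj" and e: "e \<in> Edges adj"
  shows "\<exists>e'. e' \<in> Edges adj \<and> turn e e'"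
proof -
  obtain u w where ew: "e = (u,w)" and a: "adj u w" using e by (auto simp: Edges_def)
  have "w \<in> V" using go_V[OF g a] by simp
  hence c: "card {x. adj w x} \<ge> 2" using g by (simp add: graph_ok_def)
  have "\<not> {x. adj w x} \<subseteq> {u}"
  proof
    assume "{x. adj w x} \<subseteq> {u}"
    hence "card {x. adj w x} \<le> card {u}" by (rule card_mono[rotated]) simp
    with c show False by simp
  qed
  then obtain x where "adj w x" "x \<noteq> u" by blast
  thus ?thesis using ew by (intro exI[of _ "(w,x)"]) (auto simp: Edges_def turn_def)
qed

definition nxt :: "('v \<Rightarrow> 'v \<Rightarrow> bool) \<Rightarrow> 'v \<times> 'v \<Rightarrow> 'v \<times> 'v" where
  "nxt adj e = (SOME e'. e' \<in> Edges adj \<and> turn e e')"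

lemma nxt_prop: "graph_ok V adj \<Longrightarrow> e \<in> Edges adj \<Longrightarrow> nxt adj e \<in> Edges adj \<and> turn e (nxt adj e)"
  unfolding nxt_def by (rule someI_ex, rule go_next)

definition pth :: "('v \<Rightarrow> 'v \<Rightarrow> bool) \<Rightarrow> 'v \<times> 'v \<Rightarrow> nat \<Rightarrow> 'v \<times> 'v" where
  "pth adj e = (\<lambda>i. (nxt adj ^^ i) e)"

lemma pth_path:
  assumes g: "graph_ok V adj" and e: "e \<in> Edges adj"
  shows "pth adj e \<in> Paths adj" "pth adj e 0 = e"
proof -
  have *: "(nxt adj ^^ i) e \<in> Edges adj" for i
    by (induction i) (auto simp: e nxt_prop[OF g])
  show "pth adj e \<in> Paths adj"
    unfolding Paths_def pth_def using * nxt_prop[OF g] by auto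
  show "pth adj e 0 = e" by (simp add: pth_def)
qed

lemma cons_path: "p \<in> Paths adj \<Longrightarrow> e0 \<in> Edges adj \<Longrightarrow> turn e0 (p 0) \<Longrightarrow> case_nat e0 p \<in> Paths adj"
  unfolding Paths_def by (auto split: nat.split)

lemma Transfer_Dm:
  assumes f: "f \<in> Dm adj (Suc (Suc k))"
  shows "Transfer adj f \<in> Dm adj (Suc k)"
proof -
  have "Transfer adj f \<in> FunP adj" by (simp add: FunP_def Transfer_def)
  moreover have "Transfer adj f p = Transfer adj f p'"
    if p: "p \<in> Paths adj" and p': "p' \<in> Paths adj" and eq: "\<forall>i<Suc k. p i = p' i" for p p'
  proof -
    have p0: "p 0 = p' 0" using eq by simp
    have *: "f (case_nat e0 p) = f (case_nat e0 p')" if e0: "e0 \<in> {e0 \<in> Edges adj. turn e0 (p 0)}" for e0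
    proof -
      have "case_nat e0 p \<in> Paths adj" using cons_path[OF p] e0 by auto
      moreover have "case_nat e0 p' \<in> Paths adj" using cons_path[OF p'] e0 p0 by auto
      moreover have "\<forall>i<Suc (Suc k). case_nat e0 p i = case_nat e0 p' i"
      proof (intro allI impI)
        fix i assume "i < Suc (Suc k)"
        thus "case_nat e0 p i = case_nat e0 p' i" using eq by (cases i) auto
      qed
      ultimately show ?thesis using f unfolding Dm_def by blast
    qed
    have "(\<Sum>e0\<in>{e0 \<in> Edges adj. turn e0 (p 0)}. f (case_nat e0 p))
        = (\<Sum>e0\<in>{e0 \<in> Edges adj. turn e0 (p 0)}. f (case_nat e0 p'))"
      by (rule sum.cong) (use * in auto)
    thus ?thesis using p p' p0 by (simp add: Transfer_def)
  qed
  ultimately show ?thesis unfolding Dm_def by blast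
qed

lemma Dm_mono:
  assumes mn: "m \<le> n" shows "Dm adj m \<subseteq> Dm adj n"
proof
  fix f assume f: "f \<in> Dm adj m"
  have "f p = f p'" if "p \<in> Paths adj" "p' \<in> Paths adj" "\<forall>i<n. p i = p' i" for p p'
  proof -
    have "\<forall>i<m. p i = p' i" using that(3) mn by simp
    thus ?thesis using f that(1,2) unfolding Dm_def by blast
  qed
  thus "f \<in> Dm adj n" using f unfolding Dm_def by blast
qed

lemma Dm_scale:
  assumes z: "z \<noteq> 0" and f: "(\<lambda>p. z * f p) \<in> Dm adj m"
  shows "f \<in> Dm adj m"
proof -
  have "f \<in> FunP adj" using f z unfolding Dm_def FunP_def by simp
  moreover have "f p = f p'" if "p \<in> Paths adj" "p' \<in> Paths adj" "\<forall>i<m. p i = p' i" for p p'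
  proof -
    have "z * f p = z * f p'" using f that unfolding Dm_def by blast
    thus ?thesis using z by simp
  qed
  ultimately show ?thesis unfolding Dm_def by blast
qed

lemma eig_D1:
  assumes z: "z \<noteq> 0" and T: "Transfer adj f = (\<lambda>p. z * f p)"
  shows "f \<in> Dm adj m \<Longrightarrow> f \<in> Dm adj 1"
proof (induction m)
  case 0 thus ?case using Dm_mono[of 0 1] by auto
next
  case (Suc m)
  show ?case
  proof (cases "m = 0")
    case True thus ?thesis using Suc.prems by simp
  next
    case False
    then obtain k where mk: "m = Suc k" by (cases m) auto
    have "Transfer adj f \<in> Dm adj (Suc k)" using Transfer_Dm[of f adj k] Suc.prems mk by simp
    hence "f \<in> Dm adj m" using Dm_scale[OF z] T mk by simp
    thus ?thesis by (rule Suc.IH)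
  qed
qed

lemma liftE_D1: "liftE adj g \<in> Dm adj 1"
  unfolding Dm_def FunP_def liftE_def by auto

lemma Transfer_liftE: "p \<in> Paths adj \<Longrightarrow> Transfer adj (liftE adj g) p = Sop adj g (p 0)"
  unfolding Transfer_def Sop_def liftE_def
  by (simp, intro sum.cong refl) (simp add: cons_path)

definition gof :: "('v \<Rightarrow> 'v \<Rightarrow> bool) \<Rightarrow> ((nat \<Rightarrow> 'v \<times> 'v) \<Rightarrow> complex) \<Rightarrow> 'v \<times> 'v \<Rightarrow> complex" where
  "gof adj f e = (if e \<in> Edges adj then f (pth adj e) else 0)"

lemma D1_rep:
  assumes g: "graph_ok V adj" and f: "f \<in> Dm adj 1"
  shows "f = liftE adj (gof adj f)" "gof adj f \<in> MapE adj"
proof -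
  show "gof adj f \<in> MapE adj" by (simp add: gof_def MapE_def)
  show "f = liftE adj (gof adj f)"
  proof
    fix p
    show "f p = liftE adj (gof adj f) p"
    proof (cases "p \<in> Paths adj")
      case True
      hence e: "p 0 \<in> Edges adj" by (simp add: Paths_def)
      have "f p = f (pth adj (p 0))"
      proof -
        have "\<forall>i<1. p i = pth adj (p 0) i" using pth_path(2)[OF g e] by simp
        thus ?thesis using f True pth_path(1)[OF g e] unfolding Dm_def by blast
      qed
      thus ?thesis using True e by (simp add: liftE_def gof_def)
    next
      case False
      have "f \<in> FunP adj" using f unfolding Dm_def by blast
      thus ?thesis using False by (simp add: liftE_def FunP_def)
    qed
  qed
qed

lemma liftE_inj:
  assumes g: "graph_ok V adj" and h1: "h \<in> MapE adj" and h2: "h' \<in> MapE adj"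
    and eq: "liftE adj h = liftE adj h'"
  shows "h = h'"
proof
  fix e show "h e = h' e"
  proof (cases "e \<in> Edges adj")
    case True
    have P: "pth adj e \<in> Paths adj" and P0: "pth adj e 0 = e" using pth_path[OF g True] by auto
    have "liftE adj h (pth adj e) = liftE adj h' (pth adj e)" using eq by (rule arg_cong[where f="\<lambda>F. F (pth adj e)"])
    thus ?thesis unfolding liftE_def using P P0 by simp
  next
    case False
    have "h e = 0" using h1 False unfolding MapE_def by blast
    moreover have "h' e = 0" using h2 False unfolding MapE_def by blast
    ultimately show ?thesis by simp
  qed
qed

lemma part1:
  assumes z: "z \<noteq> 0"
  shows "Eigenspace adj z \<subseteq> Dm adj 1"
proof
  fix f assume "f \<in> Eigenspace adj z"
  then obtain m where "f \<in> Dm adj m" "Transfer adj f = (\<lambda>p. z * f p)"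
    unfolding Eigenspace_def Dinf_def by blast
  thus "f \<in> Dm adj 1" using eig_D1[OF z] by blast
qed

lemma part2:
  assumes g: "graph_ok V adj" and z: "z \<noteq> 0"
  shows "Eigenspace adj z = liftE adj ` EqS adj z"
proof
  show "Eigenspace adj z \<subseteq> liftE adj ` EqS adj z"
  proof
    fix f assume f: "f \<in> Eigenspace adj z"
    hence f1: "f \<in> Dm adj 1" using part1[OF z] by blast
    note r = D1_rep[OF g f1]
    have T: "Transfer adj f = (\<lambda>p. z * f p)" using f by (simp add: Eigenspace_def)
    have "Sop adj (gof adj f) e = z * gof adj f e" if e: "e \<in> Edges adj" for e
    proof -
      have "Transfer adj f (pth adj e) = z * f (pth adj e)" using T by simp
      hence "Transfer adj (liftE adj (gof adj f)) (pth adj e) = z * liftE adj (gof adj f) (pth adj e)"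
        using r(1) by simp
      thus ?thesis using Transfer_liftE[OF pth_path(1)[OF g e], of "gof adj f"] pth_path[OF g e] by (simp add: liftE_def)
    qed
    hence "gof adj f \<in> EqS adj z" using r(2) by (simp add: EqS_def)
    thus "f \<in> liftE adj ` EqS adj z" using r(1) by blast
  qed
next
  show "liftE adj ` EqS adj z \<subseteq> Eigenspace adj z"
  proof
    fix f assume "f \<in> liftE adj ` EqS adj z"
    then obtain h where h: "h \<in> EqS adj z" and fh: "f = liftE adj h" by blast
    have "f \<in> Dinf adj" using liftE_D1 fh unfolding Dinf_def by blast
    moreover have "Transfer adj f p = z * f p" for p
    proof (cases "p \<in> Paths adj")
      case True
      hence "p 0 \<in> Edges adj" by (simp add: Paths_def)
      thus ?thesis using True h fh Transfer_liftE[OF True, of h] by (simp add: EqS_def liftE_def)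
    next
      case False thus ?thesis using fh by (simp add: Transfer_def liftE_def)
    qed
    ultimately show "f \<in> Eigenspace adj z" by (simp add: Eigenspace_def fun_eq_iff)
  qed
qed

lemma Sop_adj:
  assumes g: "graph_ok V adj" and a: "adj u w"
  shows "Sop adj h (u,w) = (\<Sum>x\<in>{x. adj u x}. h (x,u)) - h (w,u)"
proof -
  have "{e'\<in>Edges adj. turn e' (u,w)} = (\<lambda>x. (x,u)) ` ({x. adj u x} - {w})"
    using go_sym[OF g] by (auto simp: Edges_def turn_def image_iff)
  hence "Sop adj h (u,w) = (\<Sum>x\<in>{x. adj u x} - {w}. h (x,u))"
    unfolding Sop_def by (simp add: sum.reindex inj_on_def)
  also have "\<dots> = (\<Sum>x\<in>{x. adj u x}. h (x,u)) - h (w,u)"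
    using a go_fin[OF g] by (simp add: sum_diff1)
  finally show ?thesis .
qed

lemma into:
  assumes g: "graph_ok V adj" and z: "z \<noteq> 0" and f: "f \<in> EqV V (SigmaOp adj) (Rz adj z)"
  shows "dz adj z f \<in> EqS adj z"
proof -
  have "Sop adj (dz adj z f) (u,w) = z * dz adj z f (u,w)" if a: "adj u w" for u w
  proof -
    have u: "u \<in> V" using go_V[OF g a] by simp
    let ?N = "{x. adj u x}"
    let ?q = "of_nat (qv adj u) :: complex"
    have s1: "(\<Sum>x\<in>?N. dz adj z f (x,u)) = (\<Sum>x\<in>?N. f x - f u / z)"
      by (rule sum.cong) (auto simp: dz_def Edges_def go_sym[OF g])
    have s2: "(\<Sum>x\<in>?N. f x - f u / z) = (\<Sum>x\<in>?N. f x) - of_nat (card ?N) * (f u / z)"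
      by (simp add: sum_subtractf)
    have s3: "(\<Sum>x\<in>?N. f x) = (z + ?q / z) * f u"
      using f u by (simp add: EqV_def SigmaOp_def Rz_def)
    have s4: "of_nat (card ?N) = (1 + ?q)" using go_card[OF g u] by simp
    have s5: "dz adj z f (w,u) = f w - f u / z" using go_sym[OF g a] by (simp add: dz_def Edges_def)
    have s6: "dz adj z f (u,w) = f u - f w / z" using a by (simp add: dz_def Edges_def)
    have "Sop adj (dz adj z f) (u,w) = (z + ?q / z) * f u - (1 + ?q) * (f u / z) - (f w - f u / z)"
      using Sop_adj[OF g a, of "dz adj z f"] s1 s2 s3 s4 s5 by simp
    also have "\<dots> = z * (f u - f w / z)" using z by (simp add: field_simps)
    finally show ?thesis using s6 by simp
  qed
  thus ?thesis by (auto simp: EqS_def MapE_def dz_def Edges_def)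
qed

lemma sq1: "(z::complex) \<notin> {-1, 0, 1} \<Longrightarrow> z * z - 1 \<noteq> 0"
proof
  assume z: "z \<notin> {-1, 0, 1}" and "z * z - 1 = 0"
  hence "(z - 1) * (z + 1) = 0" by (simp add: algebra_simps)
  hence "z - 1 = 0 \<or> z + 1 = 0" by simp
  hence "z = 1 \<or> z = -1" by (metis eq_neg_iff_add_eq_0 eq_iff_diff_eq_0)
  thus False using z by simp
qed

lemma dz_inj:
  assumes g: "graph_ok V adj" and z: "z \<notin> {-1, 0, 1}" and f1: "f1 \<in> MapV V" and f2: "f2 \<in> MapV V"
    and eq: "dz adj z f1 = dz adj z f2"
  shows "f1 = f2"
proof
  fix u show "f1 u = f2 u"
  proof (cases "u \<in> V")
    case False thus ?thesis using f1 f2 by (simp add: MapV_def)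
  next
    case True
    then obtain w where a: "adj u w" using go_nb[OF g] by blast
    have a': "adj w u" using go_sym[OF g a] .
    have z0: "z \<noteq> 0" using z by auto
    have h1: "f1 u - f1 w / z = f2 u - f2 w / z"
      using fun_cong[OF eq, of "(u,w)"] a by (simp add: dz_def Edges_def)
    have h2: "f1 w - f1 u / z = f2 w - f2 u / z"
      using fun_cong[OF eq, of "(w,u)"] a' by (simp add: dz_def Edges_def)
    have e1: "z * (f1 u - f2 u) = f1 w - f2 w"
    proof -
      have "f1 u - f2 u = (f1 w - f2 w) / z" using h1 by (simp add: diff_divide_distrib algebra_simps)
      thus ?thesis using z0 by simp
    qed
    have e2: "z * (f1 w - f2 w) = f1 u - f2 u"
    proof -
      have "f1 w - f2 w = (f1 u - f2 u) / z" using h2 by (simp add: diff_divide_distrib algebra_simps)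
      thus ?thesis using z0 by simp
    qed
    have "z * z * (f1 u - f2 u) = f1 u - f2 u" using e1 e2 by (metis mult.assoc)
    hence "(z * z - 1) * (f1 u - f2 u) = 0" by (simp add: left_diff_distrib)
    thus ?thesis using sq1[OF z] by simp
  qed
qed

lemma surj:
  assumes g: "graph_ok V adj" and z: "z \<notin> {-1, 0, 1}" and h: "h \<in> EqS adj z"
  shows "\<exists>f\<in>EqV V (SigmaOp adj) (Rz adj z). dz adj z f = h"
proof -
  have z0: "z \<noteq> 0" using z by auto
  have d: "z * z - 1 \<noteq> 0" using sq1[OF z] .
  define A where "A u = (\<Sum>x\<in>{x. adj u x}. h (x,u))" for u
  define f where "f u = (if u \<in> V then z * A u / (z * z - 1) else 0)" for u
  have F1: "z * h (u,w) = A u - h (w,u)" if a: "adj u w" for u w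
  proof -
    have "(u,w) \<in> Edges adj" using a by (simp add: Edges_def)
    hence "Sop adj h (u,w) = z * h (u,w)" using h by (simp add: EqS_def)
    thus ?thesis using Sop_adj[OF g a] by (simp add: A_def)
  qed
  have F2: "(z * z - 1) * h (u,w) = z * A u - A w" if a: "adj u w" for u w
  proof -
    have e1: "z * h (u,w) = A u - h (w,u)" by (rule F1[OF a])
    have e2: "z * h (w,u) = A w - h (u,w)" by (rule F1[OF go_sym[OF g a]])
    show ?thesis using e1 e2 by algebra
  qed
  have dzf: "dz adj z f = h"
  proof
    fix e show "dz adj z f e = h e"
    proof (cases "e \<in> Edges adj")
      case False
      have "h e = 0" using h False unfolding EqS_def MapE_def by blast
      thus ?thesis using False by (simp add: dz_def)
    next
      case True
      then obtain u w where e: "e = (u,w)" and a: "adj u w" by (auto simp: Edges_def)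
      have "u \<in> V" "w \<in> V" using go_V[OF g a] by auto
      hence "dz adj z f e = z * A u / (z * z - 1) - A w / (z * z - 1)"
        using True e z0 by (simp add: dz_def f_def)
      also have "\<dots> = (z * A u - A w) / (z * z - 1)" by (simp add: diff_divide_distrib)
      also have "\<dots> = h e" using d e by (simp flip: F2[OF a])
      finally show ?thesis .
    qed
  qed
  have "SigmaOp adj f u = Rz adj z f u" if u: "u \<in> V" for u
  proof -
    let ?N = "{x. adj u x}"
    let ?q = "of_nat (qv adj u) :: complex"
    let ?G = "\<Sum>w\<in>?N. h (u,w)"
    have fin: "finite ?N" by (rule go_fin[OF g])
    have cN: "of_nat (card ?N) = (1 + ?q)" using go_card[OF g u] by simp
    have "z * ?G = (\<Sum>w\<in>?N. A u - h (w,u))"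
      by (simp add: sum_distrib_left F1)
    also have "\<dots> = (1 + ?q) * A u - A u" by (simp add: sum_subtractf cN A_def)
    finally have G: "z * ?G = ?q * A u" by (simp add: algebra_simps)
    have "SigmaOp adj f u = (\<Sum>w\<in>?N. z / (z * z - 1) * A w)"
      unfolding SigmaOp_def by (rule sum.cong) (auto simp: f_def dest: go_V[OF g])
    also have "\<dots> = z / (z * z - 1) * (\<Sum>w\<in>?N. A w)" by (simp add: sum_distrib_left)
    also have "(\<Sum>w\<in>?N. A w) = (\<Sum>w\<in>?N. z * A u - (z * z - 1) * h (u,w))"
      by (rule sum.cong) (auto simp: F2)
    also have "\<dots> = (1 + ?q) * z * A u - (z * z - 1) * ?G"
      by (simp add: sum_subtractf cN sum_distrib_left)
    finally have S: "SigmaOp adj f u = z / (z * z - 1) * ((1 + ?q) * z * A u - (z * z - 1) * ?G)" .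
    have G': "?G = ?q * A u / z" using G z0 by (simp add: field_simps)
    have "Rz adj z f u = (z + ?q / z) * (z * A u / (z * z - 1))" using u by (simp add: Rz_def f_def)
    also have "\<dots> = z / (z * z - 1) * ((1 + ?q) * z * A u - (z * z - 1) * (?q * A u / z))"
      using z0 d by (simp add: field_simps)
    finally show ?thesis using S G' by simp
  qed
  hence "f \<in> EqV V (SigmaOp adj) (Rz adj z)" by (simp add: EqV_def MapV_def f_def)
  thus ?thesis using dzf by blast
qed

theorem mainTheorem11:
  fixes V :: "'v set" and adj :: "'v \<Rightarrow> 'v \<Rightarrow> bool" and z :: complex
  assumes "graph_ok V adj" and "z \<noteq> 0"
  shows "Eigenspace adj z \<subseteq> Dm adj 1
       \<and> Eigenspace adj z = liftE adj ` EqS adj z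
       \<and> (z \<notin> {-1, 0, 1} \<longrightarrow>
            EqV V (SigmaOp adj) (Rz adj z) = EqV V (DeltaOp adj) (Lz adj z)
          \<and> (\<forall>f g a. dz adj z (\<lambda>v. a * f v + g v) = (\<lambda>e. a * dz adj z f e + dz adj z g e))
          \<and> bij_betw (\<lambda>f. liftE adj (dz adj z f)) (EqV V (SigmaOp adj) (Rz adj z)) (Eigenspace adj z))"
proof (intro conjI impI)
  note g = assms(1) and z0 = assms(2)
  show "Eigenspace adj z \<subseteq> Dm adj 1" by (rule part1[OF z0])
  show P2: "Eigenspace adj z = liftE adj ` EqS adj z" by (rule part2[OF g z0])
  assume z: "z \<notin> {-1, 0, 1}"
  show "EqV V (SigmaOp adj) (Rz adj z) = EqV V (DeltaOp adj) (Lz adj z)"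
  proof -
    have "SigmaOp adj f v = Rz adj z f v \<longleftrightarrow> DeltaOp adj f v = Lz adj z f v" for f v
    proof -
      have c: "(1 + of_nat (qv adj v) :: complex) \<noteq> 0"
        by (metis of_nat_Suc of_nat_eq_0_iff nat.distinct(1) add.commute plus_1_eq_Suc)
      show ?thesis unfolding SigmaOp_def Rz_def DeltaOp_def Lz_def
        using c by (auto simp: field_simps)
    qed
    thus ?thesis by (simp add: EqV_def)
  qed
  show "\<forall>f g a. dz adj z (\<lambda>v. a * f v + g v) = (\<lambda>e. a * dz adj z f e + dz adj z g e)"
    using z0 by (auto simp: dz_def fun_eq_iff field_simps)
  show "bij_betw (\<lambda>f. liftE adj (dz adj z f)) (EqV V (SigmaOp adj) (Rz adj z)) (Eigenspace adj z)"
    unfolding bij_betw_def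
  proof
    show "inj_on (\<lambda>f. liftE adj (dz adj z f)) (EqV V (SigmaOp adj) (Rz adj z))"
    proof (rule inj_onI)
      fix f1 f2 assume f1: "f1 \<in> EqV V (SigmaOp adj) (Rz adj z)" and f2: "f2 \<in> EqV V (SigmaOp adj) (Rz adj z)"
        and eq: "liftE adj (dz adj z f1) = liftE adj (dz adj z f2)"
      have "dz adj z f1 = dz adj z f2"
        by (rule liftE_inj[OF g _ _ eq]) (auto simp: MapE_def dz_def)
      thus "f1 = f2" using dz_inj[OF g z] f1 f2 by (simp add: EqV_def)
    qed
    show "(\<lambda>f. liftE adj (dz adj z f)) ` EqV V (SigmaOp adj) (Rz adj z) = Eigenspace adj z"
    proof
      show "(\<lambda>f. liftE adj (dz adj z f)) ` EqV V (SigmaOp adj) (Rz adj z) \<subseteq> Eigenspace adj z"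
        using into[OF g z0] P2 by blast
      show "Eigenspace adj z \<subseteq> (\<lambda>f. liftE adj (dz adj z f)) ` EqV V (SigmaOp adj) (Rz adj z)"
      proof
        fix F assume "F \<in> Eigenspace adj z"
        then obtain h where h: "h \<in> EqS adj z" and Fh: "F = liftE adj h" using P2 by blast
        obtain f where "f \<in> EqV V (SigmaOp adj) (Rz adj z)" "dz adj z f = h" using surj[OF g z h] by blast
        thus "F \<in> (\<lambda>f. liftE adj (dz adj z f)) ` EqV V (SigmaOp adj) (Rz adj z)" using Fh by blast
      qed
    qed
  qed
qed

end
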